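(* Suppose Assumption 3 holds and the data set is sampled from a distribution having a density with respect to Lebesgue measure. Then with probability $1$, $$\alpha:=\min_{\|\xi\|=1,\ \xi\perp\bar u}\ \max_{i\in S}\langle\xi,z_i\rangle>0 .$$
   Context: Data $(x_i,y_i)_{i=1}^n$ with $x_i\in\mathbb{R}^d$, $\|x_i\|\le 1$, $y_i\in\{-1,+1\}$, $z_i:=y_ix_i$, linearly separable. $\gamma:=\max_{\|u\|=1}\min_i\langle u,z_i\rangle>0$ and $\bar u$ is the unique unit vector attaining it. $S\subseteq\{1,\dots,n\}$ is the set of indices of support vectors, i.e. those $i$ with $\langle\bar u,z_i\rangle=\gamma$. Assumption 3: the support vectors $\{z_i:i\in S\}$ span $\mathbb{R}^d$. *)

theory Defs
  imports "HOL-Probability.Probability"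
begin

text \<open>Data points z i = y i * x i, i < n, in R^d (d encoded by the finite index type 'd).\<close>

definition linsep :: "(nat \<Rightarrow> real^'d) \<Rightarrow> nat \<Rightarrow> bool" where
  "linsep z n \<longleftrightarrow> (\<exists>u. \<forall>i<n. 0 < u \<bullet> z i)"

definition margin :: "(nat \<Rightarrow> real^'d) \<Rightarrow> nat \<Rightarrow> real" where
  "margin z n = (SUP u\<in>sphere 0 1. Min ((\<lambda>i. u \<bullet> z i) ` {..<n}))"

definition maxmargin_dir :: "(nat \<Rightarrow> real^'d) \<Rightarrow> nat \<Rightarrow> real^'d" where
  "maxmargin_dir z n = (THE u. norm u = 1 \<and> Min ((\<lambda>i. u \<bullet> z i) ` {..<n}) = margin z n)"

definition supp_vecs :: "(nat \<Rightarrow> real^'d) \<Rightarrow> nat \<Rightarrow> nat set" where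
  "supp_vecs z n = {i. i < n \<and> maxmargin_dir z n \<bullet> z i = margin z n}"

definition assumption3 :: "(nat \<Rightarrow> real^'d) \<Rightarrow> nat \<Rightarrow> bool" where
  "assumption3 z n \<longleftrightarrow> span (z ` supp_vecs z n) = UNIV"

text \<open>The minimum is attained by compactness when the constraint set is nonempty; we take
  the infimum in the extended reals, so that the empty minimum (d = 1) is +infinity.\<close>
definition alpha :: "(nat \<Rightarrow> real^'d) \<Rightarrow> nat \<Rightarrow> ereal" where
  "alpha z n = (INF \<xi>\<in>{\<xi>. norm \<xi> = 1 \<and> \<xi> \<bullet> maxmargin_dir z n = 0}.
                  ereal (Max ((\<lambda>i. \<xi> \<bullet> z i) ` supp_vecs z n)))"

end

theory Submission
  imports Defs
begin


lemma cont_Min: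
  fixes f :: "'i \<Rightarrow> 'a::topological_space \<Rightarrow> real"
  assumes "finite A" "A \<noteq> {}" "\<And>i. i \<in> A \<Longrightarrow> continuous_on S (f i)"
  shows "continuous_on S (\<lambda>x. Min ((\<lambda>i. f i x) ` A))"
  using assms
proof (induction A rule: finite_ne_induct)
  case (singleton a) then show ?case by simp
next
  case (insert a F)
  have "(\<lambda>x. Min ((\<lambda>i. f i x) ` insert a F)) = (\<lambda>x. min (f a x) (Min ((\<lambda>i. f i x) ` F)))"
    using insert by (auto simp: Min_insert)
  then show ?case using insert by (auto intro!: continuous_on_min)
qed

lemma cont_Max:
  fixes f :: "'i \<Rightarrow> 'a::topological_space \<Rightarrow> real"
  assumes "finite A" "A \<noteq> {}" "\<And>i. i \<in> A \<Longrightarrow> continuous_on S (f i)"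
  shows "continuous_on S (\<lambda>x. Max ((\<lambda>i. f i x) ` A))"
  using assms
proof (induction A rule: finite_ne_induct)
  case (singleton a) then show ?case by simp
next
  case (insert a F)
  have "(\<lambda>x. Max ((\<lambda>i. f i x) ` insert a F)) = (\<lambda>x. max (f a x) (Max ((\<lambda>i. f i x) ` F)))"
    using insert by (auto simp: Max_insert)
  then show ?case using insert by (auto intro!: continuous_on_max)
qed

locale mm =
  fixes z :: "nat \<Rightarrow> real^'d" and n :: nat
  assumes n1: "n \<ge> 1" and ls: "linsep z n"
begin

definition m :: "real^'d \<Rightarrow> real" where "m u = Min ((\<lambda>i. u \<bullet> z i) ` {..<n})"

lemma fin: "finite {..<n}" by auto
lemma ne: "{..<n} \<noteq> {}" using n1 by (auto simp: lessThan_empty_iff)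

lemma m_ge_iff: "c \<le> m u \<longleftrightarrow> (\<forall>i<n. c \<le> u \<bullet> z i)"
  unfolding m_def using fin ne by (auto simp: Min_ge_iff)
lemma m_gr_iff: "c < m u \<longleftrightarrow> (\<forall>i<n. c < u \<bullet> z i)"
  unfolding m_def using fin ne by (auto simp: Min_gr_iff)
lemma m_le: "i < n \<Longrightarrow> m u \<le> u \<bullet> z i"
  unfolding m_def using fin by auto

lemma m_cont: "continuous_on UNIV m"
  unfolding m_def[abs_def] by (rule cont_Min[OF fin ne]) (auto intro!: continuous_intros)

lemma bdd: "bdd_above (m ` S)" if "S \<subseteq> sphere 0 1"
proof (rule bdd_aboveI)
  fix x assume "x \<in> m ` S"
  then obtain u where u: "u \<in> S" "x = m u" by auto
  have "x \<le> u \<bullet> z 0" using u m_le n1 by auto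
  also have "\<dots> \<le> norm u * norm (z 0)" by (rule norm_cauchy_schwarz)
  also have "\<dots> = norm (z 0)" using u that by auto
  finally show "x \<le> norm (z 0)" .
qed

lemma margin_eq: "margin z n = Sup (m ` sphere 0 1)"
  unfolding margin_def m_def by simp

lemma exists_max: "\<exists>u\<in>sphere 0 1. \<forall>v\<in>sphere 0 1. m v \<le> m u"
  by (rule continuous_attains_sup) (auto intro: continuous_on_subset[OF m_cont])

lemma m_le_margin: "norm u = 1 \<Longrightarrow> m u \<le> margin z n"
  unfolding margin_eq by (rule cSUP_upper) (auto intro: bdd)

lemma margin_attained: obtains u where "norm u = 1" "m u = margin z n"
proof -
  obtain u where u: "u \<in> sphere 0 1" "\<forall>v\<in>sphere 0 1. m v \<le> m u" using exists_max by blast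
  have "margin z n = m u" unfolding margin_eq
    by (rule cSup_eq_maximum) (use u in auto)
  then show ?thesis using that u by auto
qed

lemma margin_pos: "margin z n > 0"
proof -
  obtain u where u: "\<forall>i<n. 0 < u \<bullet> z i" using ls unfolding linsep_def by auto
  have "u \<noteq> 0" using u n1 by (metis inner_zero_left less_irrefl zero_less_one less_le_trans le_less)
  then have nu: "norm u > 0" by auto
  have "0 < m (u /\<^sub>R norm u)" unfolding m_gr_iff using u nu by (auto simp: divide_pos_pos)
  also have "\<dots> \<le> margin z n" by (rule m_le_margin) (use nu in auto)
  finally show ?thesis .
qed

lemma unique: assumes "norm u1 = 1" "m u1 = margin z n" "norm u2 = 1" "m u2 = margin z n"
  shows "u1 = u2"
proof (rule ccontr)
  assume ne: "u1 \<noteq> u2"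
  let ?g = "margin z n"
  define v where "v = (1/2) *\<^sub>R (u1 + u2)"
  have uu: "u1 \<bullet> u1 = 1" "u2 \<bullet> u2 = 1" using assms by (simp_all add: dot_square_norm)
  have "0 < norm (u1 - u2)^2" using ne by auto
  also have "norm (u1 - u2)^2 = 2 - 2 * (u1 \<bullet> u2)"
    using uu by (simp add: power2_norm_eq_inner inner_diff algebra_simps inner_commute)
  finally have i12: "u1 \<bullet> u2 < 1" by simp
  have "norm v ^2 = (1/4) * (2 + 2 * (u1 \<bullet> u2))"
    using uu unfolding v_def by (simp add: power2_norm_eq_inner inner_add algebra_simps inner_commute)
  also have "\<dots> < 1" using i12 by simp
  finally have nv1: "norm v < 1"
    by (metis abs_norm_cancel abs_square_less_1)
  have vz: "?g \<le> v \<bullet> z i" if "i < n" for i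
  proof -
    have "?g \<le> u1 \<bullet> z i" "?g \<le> u2 \<bullet> z i" using assms m_ge_iff that by (metis order_refl)+
    then show ?thesis unfolding v_def by (simp add: inner_add_left)
  qed
  have "v \<noteq> 0" using vz[of 0] n1 margin_pos by auto
  then have nv: "norm v > 0" by auto
  have "?g < m (v /\<^sub>R norm v)" unfolding m_gr_iff
  proof (intro allI impI)
    fix i assume i: "i < n"
    have "?g < ?g / norm v" using margin_pos nv nv1 by (simp add: less_divide_eq)
    also have "\<dots> \<le> (v \<bullet> z i) / norm v" using vz[OF i] nv by (simp add: divide_right_mono)
    finally show "?g < (v /\<^sub>R norm v) \<bullet> z i" by (simp add: field_simps)
  qed
  moreover have "m (v /\<^sub>R norm v) \<le> ?g" by (rule m_le_margin) (use nv in auto)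
  ultimately show False by simp
qed

definition ub where "ub = maxmargin_dir z n"

lemma ub: "norm ub = 1" "m ub = margin z n"
proof -
  obtain u where u: "norm u = 1" "m u = margin z n" by (rule margin_attained)
  have "norm ub = 1 \<and> m ub = margin z n"
    unfolding ub_def maxmargin_dir_def m_def[symmetric]
    by (rule theI[of _ u]) (use u unique in auto)
  then show "norm ub = 1" "m ub = margin z n" by auto
qed

lemma supp_iff: "i \<in> supp_vecs z n \<longleftrightarrow> i < n \<and> ub \<bullet> z i = margin z n"
  unfolding supp_vecs_def ub_def by auto

lemma ub_ge: "i < n \<Longrightarrow> margin z n \<le> ub \<bullet> z i"
  using ub(2) m_ge_iff by (metis order_refl)

lemma perturb:
  assumes vu: "v \<bullet> ub < 0" and vS: "\<And>i. i \<in> supp_vecs z n \<Longrightarrow> 0 \<le> v \<bullet> z i"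
  shows False
proof -
  let ?g = "margin z n"
  define c where "c = - 2 * (v \<bullet> ub) / ((norm v)^2 + 1)"
  have c0: "c > 0" unfolding c_def using vu by (intro divide_pos_pos) (auto intro: add_nonneg_pos)
  have E1: "\<forall>\<^sub>F e in at_right (0::real). \<forall>i\<in>{..<n}. ?g \<le> (ub + e *\<^sub>R v) \<bullet> z i"
  proof (rule eventually_ball_finite[OF fin], rule ballI)
    fix i assume i: "i \<in> {..<n}"
    show "\<forall>\<^sub>F e in at_right 0. ?g \<le> (ub + e *\<^sub>R v) \<bullet> z i"
    proof (cases "i \<in> supp_vecs z n")
      case True
      show ?thesis using eventually_at_right_less[of "0::real"]
      proof (rule eventually_mono)
        fix e :: real assume "0 < e"
        then have "0 \<le> e * (v \<bullet> z i)" using vS[OF True] by simp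
        then show "?g \<le> (ub + e *\<^sub>R v) \<bullet> z i" using True supp_iff by (simp add: inner_add_left)
      qed
    next
      case False
      then have "?g < ub \<bullet> z i" using ub_ge[of i] i supp_iff by (auto simp: less_le)
      moreover have "((\<lambda>e. ub \<bullet> z i + e * (v \<bullet> z i)) \<longlongrightarrow> ub \<bullet> z i + 0 * (v \<bullet> z i)) (at_right 0)"
        by (intro tendsto_intros)
      ultimately have "\<forall>\<^sub>F e in at_right 0. ?g < ub \<bullet> z i + e * (v \<bullet> z i)"
        by (intro order_tendstoD(1)) auto
      then show ?thesis by eventually_elim (simp add: inner_add_left)
    qed
  qed
  have E2: "\<forall>\<^sub>F e in at_right (0::real). e < c"
    using order_tendstoD(2)[OF tendsto_ident_at c0] .
  have "\<forall>\<^sub>F e in at_right (0::real). 0 < e \<and> e < c \<and> (\<forall>i\<in>{..<n}. ?g \<le> (ub + e *\<^sub>R v) \<bullet> z i)"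
    using eventually_at_right_less E2 E1 by eventually_elim auto
  then obtain e where e: "0 < e" "e < c" "\<And>i. i < n \<Longrightarrow> ?g \<le> (ub + e *\<^sub>R v) \<bullet> z i"
    using eventually_happens' [OF trivial_limit_at_right_real] by blast
  define w where "w = ub + e *\<^sub>R v"
  have uu: "ub \<bullet> ub = 1" using ub(1) by (simp add: dot_square_norm)
  have "e * (norm v)^2 \<le> c * (norm v)^2" using e by (simp add: mult_right_mono)
  also have "\<dots> < c * ((norm v)^2 + 1)" using c0 by simp
  also have "\<dots> = - 2 * (v \<bullet> ub)" unfolding c_def using add_pos_nonneg[of 1 "(norm v)^2"] by simp
  finally have key: "e * (norm v)^2 < - 2 * (v \<bullet> ub)" .
  have "(norm w)^2 = w \<bullet> w" by (simp add: dot_square_norm)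
  also have "\<dots> = 1 + e * (2 * (v \<bullet> ub) + e * (norm v)^2)"
    unfolding w_def inner_add_left inner_add_right inner_scaleR_left inner_scaleR_right
    using uu by (simp add: inner_commute[of ub v] algebra_simps dot_square_norm power2_eq_square)
  also have "\<dots> < 1" using key e(1) by (simp add: mult_pos_neg)
  finally have nw1: "norm w < 1" by (metis abs_norm_cancel abs_square_less_1)
  have wz: "\<And>i. i < n \<Longrightarrow> ?g \<le> w \<bullet> z i" using e(3) unfolding w_def by auto
  have "w \<noteq> 0" using wz[of 0] n1 margin_pos by auto
  then have nw: "norm w > 0" by auto
  have "?g < m (w /\<^sub>R norm w)" unfolding m_gr_iff
  proof (intro allI impI)
    fix i assume i: "i < n"
    have "?g < ?g / norm w" using margin_pos nw nw1 by (simp add: less_divide_eq)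
    also have "\<dots> \<le> (w \<bullet> z i) / norm w" using wz[OF i] nw by (simp add: divide_right_mono)
    finally show "?g < (w /\<^sub>R norm w) \<bullet> z i" by (simp add: field_simps)
  qed
  moreover have "m (w /\<^sub>R norm w) \<le> ?g" by (rule m_le_margin) (use nw in auto)
  ultimately show False by simp
qed

lemma finS: "finite (supp_vecs z n)" unfolding supp_vecs_def by auto

lemma xi_exists:
  assumes a3: "assumption3 z n" and al: "alpha z n \<le> 0"
  shows "\<exists>\<xi>. norm \<xi> = 1 \<and> \<xi> \<bullet> ub = 0 \<and> (\<forall>i\<in>supp_vecs z n. \<xi> \<bullet> z i \<le> 0)"
proof -
  let ?S = "supp_vecs z n"
  have neS: "?S \<noteq> {}"
  proof
    assume "?S = {}"
    then have "(UNIV :: (real^'d) set) = {0}" using a3 unfolding assumption3_def by simp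
    moreover obtain x :: "real^'d" where "norm x = 1"
      using norm_axis_1 by blast
    ultimately show False by auto
  qed
  define K where "K = {\<xi>::real^'d. norm \<xi> = 1 \<and> \<xi> \<bullet> ub = 0}"
  define g where "g \<xi> = Max ((\<lambda>i. \<xi> \<bullet> z i) ` ?S)" for \<xi>
  have aeq: "alpha z n = (INF \<xi>\<in>K. ereal (g \<xi>))" unfolding alpha_def K_def ub_def g_def by simp
  have Kne: "K \<noteq> {}"
  proof
    assume "K = {}"
    have "ereal 1 \<le> alpha z n" unfolding aeq by (rule INF_greatest) (simp only: \<open>K = {}\<close> empty_iff)
    then have "ereal 1 \<le> 0" using al by (rule order_trans)
    then show False unfolding ereal_less_eq(4) by linarith
  qed
  have "K = sphere 0 1 \<inter> {x. ub \<bullet> x = 0}" unfolding K_def by (auto simp: inner_commute)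
  then have cK: "compact K" by (simp add: compact_Int_closed closed_hyperplane)
  have cg: "continuous_on K g" unfolding g_def[abs_def]
    by (rule cont_Max[OF finS neS]) (auto intro!: continuous_intros)
  obtain \<xi> where \<xi>: "\<xi> \<in> K" "\<And>y. y \<in> K \<Longrightarrow> g \<xi> \<le> g y"
    using continuous_attains_inf[OF cK Kne cg] by blast
  have "ereal (g \<xi>) \<le> alpha z n" unfolding aeq by (rule INF_greatest) (simp only: ereal_less_eq(3) \<xi>(2))
  from order_trans[OF this al] have "ereal (g \<xi>) \<le> 0" .
  then have "g \<xi> \<le> 0" by (simp only: ereal_less_eq(4))
  then have "\<forall>i\<in>?S. \<xi> \<bullet> z i \<le> 0" unfolding g_def using finS neS by (simp add: Max_le_iff)
  then show ?thesis using \<xi>(1) unfolding K_def by auto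
qed

lemma main_bad:
  assumes a3: "assumption3 z n" and al: "alpha z n \<le> 0"
  shows "\<exists>T\<subseteq>{..<n}. \<exists>i<n. i \<notin> T \<and> (\<exists>w\<in>span (z ` T). (\<forall>t\<in>T. w \<bullet> z t = 1) \<and> w \<bullet> z i = 1)"
proof -
  let ?S = "supp_vecs z n"
  let ?g = "margin z n"
  obtain \<xi> where \<xi>: "norm \<xi> = 1" "\<xi> \<bullet> ub = 0" "\<And>i. i \<in> ?S \<Longrightarrow> \<xi> \<bullet> z i \<le> 0"
    using xi_exists[OF a3 al] by blast
  define T where "T = {i\<in>?S. \<xi> \<bullet> z i = 0}"
  have TS: "T \<subseteq> ?S" unfolding T_def by auto
  have "\<exists>i\<in>?S. \<xi> \<bullet> z i < 0"
  proof (rule ccontr)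
    assume "\<not> ?thesis"
    then have z0: "\<And>i. i \<in> ?S \<Longrightarrow> \<xi> \<bullet> z i = 0" using \<xi>(3) by (meson le_less)
    have "\<xi> \<in> span (z ` ?S)" using a3 unfolding assumption3_def by simp
    then have "orthogonal \<xi> \<xi>" by (rule orthogonal_to_span) (use z0 in \<open>auto simp: orthogonal_def\<close>)
    then show False using \<xi>(1) by (auto simp: orthogonal_def)
  qed
  then obtain i where i: "i \<in> ?S" "\<xi> \<bullet> z i < 0" by blast
  obtain p q where pq: "p \<in> span (z ` T)" "\<And>w. w \<in> span (z ` T) \<Longrightarrow> orthogonal q w" "ub = p + q"
    using orthogonal_subspace_decomp_exists[of "z ` T" ub] by blast
  have q0: "q = 0"
  proof (rule ccontr)
    assume qn: "q \<noteq> 0"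
    define K where "K = (\<Sum>j\<in>?S. \<bar>q \<bullet> z j\<bar> / (- (\<xi> \<bullet> z j)))"
    define v where "v = - q - K *\<^sub>R \<xi>"
    have qp: "q \<bullet> p = 0" using pq(2)[OF pq(1)] by (simp add: orthogonal_def)
    have xq: "\<xi> \<bullet> q = - (\<xi> \<bullet> p)" using \<xi>(2) pq(3) by (simp add: inner_add_right)
    have "v \<bullet> ub = - (q \<bullet> q)" unfolding v_def pq(3)
      using xq qp by (simp add: inner_diff_left inner_add_right inner_commute[of q p] algebra_simps)
    also have "\<dots> < 0" using qn by simp
    finally have vu: "v \<bullet> ub < 0" .
    show False
    proof (rule perturb[OF vu])
      fix j assume j: "j \<in> ?S"
      show "0 \<le> v \<bullet> z j"
      proof (cases "\<xi> \<bullet> z j = 0")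
        case True
        then have "j \<in> T" using j unfolding T_def by auto
        then have "q \<bullet> z j = 0" using pq(2)[of "z j"] by (auto simp: orthogonal_def span_base)
        then show ?thesis using True unfolding v_def by (simp add: inner_diff_left)
      next
        case False
        then have neg: "- (\<xi> \<bullet> z j) > 0" using \<xi>(3)[OF j] by simp
        have nn: "0 \<le> \<bar>q \<bullet> z x\<bar> / (- (\<xi> \<bullet> z x))" if "x \<in> ?S" for x
          by (rule divide_nonneg_nonneg) (use \<xi>(3)[OF that] in auto)
        have "\<bar>q \<bullet> z j\<bar> / (- (\<xi> \<bullet> z j)) \<le> K" unfolding K_def
          by (rule member_le_sum[OF j _ finS], rule nn) blast
        then have "\<bar>q \<bullet> z j\<bar> \<le> K * (- (\<xi> \<bullet> z j))" using pos_divide_le_eq[OF neg] by blast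
        then show ?thesis unfolding v_def by (simp add: inner_diff_left)
      qed
    qed
  qed
  have ubs: "ub \<in> span (z ` T)" using pq q0 by simp
  define w where "w = (1 / ?g) *\<^sub>R ub"
  have ws: "w \<in> span (z ` T)" unfolding w_def by (rule span_mul[OF ubs])
  have w1: "w \<bullet> z j = 1" if "j \<in> ?S" for j
    using that margin_pos supp_iff[of j] unfolding w_def by auto
  have "T \<subseteq> {..<n}" using TS supp_iff by auto
  moreover have "i < n" "i \<notin> T" using i supp_iff unfolding T_def by auto
  ultimately show ?thesis using ws w1 TS i by blast
qed

end


fun projL :: "'a::real_inner list \<Rightarrow> 'a \<Rightarrow> 'a" where
  "projL [] y = 0"
| "projL (v # vs) y = projL vs y + (inner y (v - projL vs v) / (norm (v - projL vs v))^2) *\<^sub>R (v - projL vs v)"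

lemma projL_span: "projL L y \<in> span (set L)"
proof (induction L arbitrary: y)
  case Nil then show ?case by (simp add: span_zero)
next
  case (Cons v vs)
  have sub: "span (set vs) \<subseteq> span (set (v # vs))" by (rule span_mono) auto
  have a: "projL vs y \<in> span (set (v # vs))" using Cons sub by blast
  have b: "projL vs v \<in> span (set (v # vs))" using Cons sub by blast
  have c: "v \<in> span (set (v # vs))" by (rule span_base) simp
  have "v - projL vs v \<in> span (set (v # vs))" using b c by (rule span_diff[rotated])
  then show ?case using a by (auto intro: span_add span_scale)
qed

lemma orth_span: "(\<And>u. u \<in> S \<Longrightarrow> inner x u = 0) \<Longrightarrow> w \<in> span S \<Longrightarrow> inner x w = 0"
  using orthogonal_to_span[of w S x] unfolding orthogonal_def by blast

lemma projL_orth: "u \<in> set L \<Longrightarrow> inner (y - projL L y) u = 0"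
proof (induction L arbitrary: y u)
  case Nil then show ?case by simp
next
  case (Cons v vs)
  let ?P = "projL vs"
  define r where "r = v - ?P v"
  define c where "c = inner y r / (norm r)^2"
  have eq: "projL (v # vs) y = ?P y + c *\<^sub>R r" unfolding r_def c_def by simp
  have IHs: "inner (x - ?P x) w = 0" if "w \<in> span (set vs)" for x w
    by (rule orth_span[OF _ that]) (rule Cons.IH)
  have rs: "inner r w = 0" if "w \<in> span (set vs)" for w unfolding r_def by (rule IHs[OF that])
  have "inner (y - ?P y - c *\<^sub>R r) u = 0"
  proof (cases "u = v")
    case True
    have v: "v = r + ?P v" unfolding r_def by simp
    have Pv: "?P v \<in> span (set vs)" by (rule projL_span)
    have Py: "?P y \<in> span (set vs)" by (rule projL_span)
    have 1: "inner (y - ?P y) (?P v) = 0" by (rule IHs[OF Pv])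
    have 2: "inner r (?P v) = 0" by (rule rs[OF Pv])
    have 3: "inner (?P y) r = 0" using rs[OF Py] by (simp add: inner_commute)
    have 4: "inner y r - c * inner r r = 0"
    proof (cases "r = 0")
      case True then show ?thesis by simp
    next
      case False
      then show ?thesis unfolding c_def by (simp add: dot_square_norm)
    qed
    have "inner (y - ?P y - c *\<^sub>R r) u = inner (y - ?P y - c *\<^sub>R r) r + inner (y - ?P y - c *\<^sub>R r) (?P v)"
      using True v by (metis inner_add_right)
    also have "\<dots> = 0" using 1 2 3 4 by (simp add: inner_diff_left)
    finally show ?thesis .
  next
    case False
    then have u: "u \<in> set vs" using Cons.prems by simp
    have "inner r u = 0" by (rule rs) (use u in \<open>simp add: span_base\<close>)
    then show ?thesis using Cons.IH[OF u, of y] by (simp add: inner_diff_left)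
  qed
  then show ?case unfolding eq by (simp add: algebra_simps)
qed

lemma projL_meas:
  fixes fs :: "('m \<Rightarrow> 'b::{second_countable_topology,real_inner}) list"
  assumes "\<And>f. f \<in> set fs \<Longrightarrow> f \<in> borel_measurable M" "g \<in> borel_measurable M"
  shows "(\<lambda>x. projL (map (\<lambda>f. f x) fs) (g x)) \<in> borel_measurable M"
  using assms
proof (induction fs arbitrary: g)
  case Nil then show ?case by simp
next
  case (Cons f fs)
  have fb: "f \<in> borel_measurable M" using Cons.prems by simp
  have gb: "g \<in> borel_measurable M" using Cons.prems by simp
  have gm: "(\<lambda>x. projL (map (\<lambda>f. f x) fs) (g x)) \<in> borel_measurable M"
    using Cons by simp
  have fm: "(\<lambda>x. projL (map (\<lambda>f. f x) fs) (f x)) \<in> borel_measurable M"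
    using Cons by simp
  have d: "(\<lambda>x. f x - projL (map (\<lambda>f. f x) fs) (f x)) \<in> borel_measurable M"
    by (rule borel_measurable_diff[OF fb fm])
  have nd: "(\<lambda>x. norm (f x - projL (map (\<lambda>f. f x) fs) (f x))) \<in> borel_measurable M"
    by (rule measurable_compose[OF d borel_measurable_norm])
  show ?case
    by simp (intro borel_measurable_add borel_measurable_scaleR borel_measurable_divide
        borel_measurable_inner borel_measurable_power nd d gb gm)
qed

lemma bad_r:
  fixes z :: "nat \<Rightarrow> 'a::euclidean_space"
  assumes T: "set ts = T" "t1 \<in> T" and w: "w \<in> span (z ` T)" "\<And>t. t \<in> T \<Longrightarrow> inner w (z t) = 1"
    "inner w (z i) = 1"
  defines "r \<equiv> z t1 - projL (map (\<lambda>t. z t - z t1) ts) (z t1)"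
  shows "r \<noteq> 0 \<and> inner r (z i - z t1) = 0"
proof -
  define D where "D = (\<lambda>t. z t - z t1) ` T"
  define p where "p = projL (map (\<lambda>t. z t - z t1) ts) (z t1)"
  have setD: "set (map (\<lambda>t. z t - z t1) ts) = D" unfolding D_def using T by simp
  have pD: "p \<in> span D" unfolding p_def setD[symmetric] by (rule projL_span)
  have rD: "inner r u = 0" if "u \<in> span D" for u
    by (rule orth_span[OF _ that]) (unfold r_def setD[symmetric], rule projL_orth)
  have wD: "inner w u = 0" if "u \<in> span D" for u
  proof (rule orth_span[OF _ that])
    fix u assume "u \<in> D"
    then obtain t where "t \<in> T" "u = z t - z t1" unfolding D_def by auto
    then show "inner w u = 0" using w(2) T(2) by (simp add: inner_diff_right)
  qed
  have wr: "inner w r = 1" unfolding r_def p_def[symmetric]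
    using w(2)[OF T(2)] wD[OF pD] by (simp add: inner_diff_right)
  have "span (z ` T) \<subseteq> span (insert (z t1) D)"
  proof (rule span_minimal[OF _ subspace_span], rule subsetI)
    fix x assume "x \<in> z ` T"
    then obtain t where t: "t \<in> T" "x = z t" by auto
    have "z t - z t1 \<in> span (insert (z t1) D)" using t unfolding D_def by (intro span_base) auto
    moreover have "z t1 \<in> span (insert (z t1) D)" by (intro span_base) auto
    ultimately have "(z t - z t1) + z t1 \<in> span (insert (z t1) D)" by (rule span_add)
    then show "x \<in> span (insert (z t1) D)" using t by simp
  qed
  with w(1) have "w \<in> span (insert (z t1) D)" by blast
  then obtain k where k: "w - k *\<^sub>R z t1 \<in> span D" using span_breakdown_eq by blast
  define x where "x = w - k *\<^sub>R r"
  have "x = (w - k *\<^sub>R z t1) + k *\<^sub>R p" unfolding x_def r_def p_def by (simp add: algebra_simps)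
  then have xD: "x \<in> span D" using k pD by (simp add: span_add span_scale)
  have "inner x x = inner w x - k * inner r x" unfolding x_def by (simp add: inner_diff_left)
  then have "inner x x = 0" using wD[OF xD] rD[OF xD] by simp
  then have "x = 0" by simp
  then have wkr: "w = k *\<^sub>R r" unfolding x_def by simp
  have "r \<noteq> 0" using wr by auto
  moreover have "k \<noteq> 0" using wr wkr by auto
  moreover have "k * inner r (z i - z t1) = 0" using wkr w(3) w(2)[OF T(2)]
    by (metis inner_diff_right inner_scaleR_left right_minus_eq)
  ultimately show ?thesis by simp
qed



definition rr :: "(nat \<Rightarrow> real) \<Rightarrow> nat list \<Rightarrow> nat \<Rightarrow> (nat \<Rightarrow> real^'d) \<Rightarrow> real^'d" where
  "rr \<sigma> ts t1 x = \<sigma> t1 *\<^sub>R x t1 - projL (map (\<lambda>t. \<sigma> t *\<^sub>R x t - \<sigma> t1 *\<^sub>R x t1) ts) (\<sigma> t1 *\<^sub>R x t1)"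

definition badP :: "(nat \<Rightarrow> real) \<Rightarrow> nat list \<Rightarrow> nat \<Rightarrow> nat \<Rightarrow> (nat \<Rightarrow> real^'d) \<Rightarrow> bool" where
  "badP \<sigma> ts t1 i x \<longleftrightarrow> rr \<sigma> ts t1 x \<noteq> 0 \<and> inner (rr \<sigma> ts t1 x) (\<sigma> i *\<^sub>R x i - \<sigma> t1 *\<^sub>R x t1) = 0"

lemma rr_cong: "(\<And>t. t \<in> insert t1 (set ts) \<Longrightarrow> x t = y t) \<Longrightarrow> rr \<sigma> ts t1 x = rr \<sigma> ts t1 y"
  unfolding rr_def by (simp cong: map_cong)

lemma comp_meas: "t \<in> I \<Longrightarrow> (\<lambda>x. x t) \<in> borel_measurable (PiM I (\<lambda>_. lborel :: (real^'d) measure))"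
  using measurable_component_singleton[of t I "\<lambda>_. lborel :: (real^'d) measure"] by simp

lemma rr_meas:
  assumes "set ts \<subseteq> I" "t1 \<in> I"
  shows "(\<lambda>x. rr \<sigma> ts t1 x) \<in> borel_measurable (PiM I (\<lambda>_. lborel :: (real^'d) measure))"
proof -
  let ?M = "PiM I (\<lambda>_. lborel :: (real^'d) measure)"
  define fs :: "((nat \<Rightarrow> real^'d) \<Rightarrow> real^'d) list" where "fs = map (\<lambda>t x. \<sigma> t *\<^sub>R x t - \<sigma> t1 *\<^sub>R x t1) ts"
  have m1: "(\<lambda>x. \<sigma> t1 *\<^sub>R x t1) \<in> borel_measurable ?M"
    by (intro borel_measurable_scaleR borel_measurable_const comp_meas assms)
  have "f \<in> borel_measurable ?M" if fin: "f \<in> set fs" for f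
  proof -
    obtain t where t: "t \<in> set ts" "f = (\<lambda>x. \<sigma> t *\<^sub>R x t - \<sigma> t1 *\<^sub>R x t1)" using fin unfolding fs_def set_map by blast
    show ?thesis unfolding t(2)
      by (intro borel_measurable_diff borel_measurable_scaleR borel_measurable_const comp_meas m1)
         (use assms t in auto)
  qed
  from projL_meas[OF this m1] have
    "(\<lambda>x. projL (map (\<lambda>f. f x) fs) (\<sigma> t1 *\<^sub>R x t1)) \<in> borel_measurable ?M" .
  moreover have "\<And>x. map (\<lambda>f. f x) fs = map (\<lambda>t. \<sigma> t *\<^sub>R x t - \<sigma> t1 *\<^sub>R x t1) ts"
    unfolding fs_def by simp
  ultimately have "(\<lambda>x. projL (map (\<lambda>t. \<sigma> t *\<^sub>R x t - \<sigma> t1 *\<^sub>R x t1) ts) (\<sigma> t1 *\<^sub>R x t1)) \<in> borel_measurable ?M"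
    by simp
  then show ?thesis unfolding rr_def by (intro borel_measurable_diff m1)
qed

lemma badP_sets:
  assumes "set ts \<subseteq> I" "t1 \<in> I" "i \<in> I"
  shows "{x \<in> space (PiM I (\<lambda>_. lborel :: (real^'d) measure)). \<not> badP \<sigma> ts t1 i x} \<in> sets (PiM I (\<lambda>_. lborel :: (real^'d) measure))"
proof -
  let ?M = "PiM I (\<lambda>_. lborel :: (real^'d) measure)"
  have [measurable]: "(\<lambda>x. rr \<sigma> ts t1 x) \<in> borel_measurable ?M" by (rule rr_meas) (use assms in auto)
  have [measurable]: "(\<lambda>x. x i) \<in> borel_measurable ?M" "(\<lambda>x. x t1) \<in> borel_measurable ?M"
    using assms by (auto intro: comp_meas)
  show ?thesis unfolding badP_def by measurable
qed

lemma hyper_null: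
  assumes "a \<noteq> (0::real^'d)"
  shows "{y. inner a y = b} \<in> null_sets lborel"
proof -
  have "negligible {y. inner a y = b}" using negligible_hyperplane assms by blast
  then have "{y. inner a y = b} \<in> null_sets lebesgue" by (simp add: negligible_iff_null_sets)
  moreover have "{y. inner a y = b} \<in> sets borel" by (intro borel_closed closed_hyperplane)
  ultimately show ?thesis by (auto simp: null_sets_completion_iff)
qed

lemma null_bad:
  fixes n :: nat and \<sigma> :: "nat \<Rightarrow> real"
  assumes ts: "set ts \<subseteq> {..<n}" "t1 \<in> set ts" and i: "i < n" "i \<notin> set ts" and si: "\<sigma> i \<noteq> 0"
  shows "AE x in PiM {..<n} (\<lambda>_. lborel :: (real^'d) measure). \<not> badP \<sigma> ts t1 i x"
proof -
  let ?L = "\<lambda>_::nat. lborel :: (real^'d) measure"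
  define I where "I = {..<n} - {i}"
  have In: "I \<union> {i} = {..<n}" "I \<inter> {i} = {}" "finite I" using i unfolding I_def by auto
  interpret ps: product_sigma_finite ?L
    by (simp add: product_sigma_finite_def lborel.sigma_finite_measure_axioms)
  interpret pI: finite_product_sigma_finite ?L I by standard (fact In(3))
  interpret pi: finite_product_sigma_finite ?L "{i}" by standard simp
  interpret pp: pair_sigma_finite "PiM I ?L" "PiM {i} ?L" by standard
  let ?N = "PiM {..<n} ?L"
  let ?P = "PiM I ?L \<Otimes>\<^sub>M PiM {i} ?L"
  have sets: "{x \<in> space ?N. \<not> badP \<sigma> ts t1 i x} \<in> sets ?N"
    by (rule badP_sets) (use ts i in auto)
  have mm: "merge I {i} \<in> measurable ?P ?N" using measurable_merge[of I "{i}" ?L] In(1) by simp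
  have eqN: "distr ?P ?N (merge I {i}) = ?N" using ps.distr_merge[OF In(2) In(3)] In(1) by simp
  have "AE y in ?P. \<not> badP \<sigma> ts t1 i (merge I {i} y)"
  proof (rule pp.AE_pair_measure)
    have "{y \<in> space ?P. \<not> badP \<sigma> ts t1 i (merge I {i} y)} = merge I {i} -` {x \<in> space ?N. \<not> badP \<sigma> ts t1 i x} \<inter> space ?P"
      using measurable_space[OF mm] by auto
    then show "{y \<in> space ?P. \<not> badP \<sigma> ts t1 i (merge I {i} y)} \<in> sets ?P"
      using measurable_sets[OF mm sets] by simp
    show "AE a in PiM I ?L. AE b in PiM {i} ?L. \<not> badP \<sigma> ts t1 i (merge I {i} (a, b))"
    proof (rule AE_I2)
      fix a assume a: "a \<in> space (PiM I ?L)"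
      define r where "r = rr \<sigma> ts t1 a"
      have rm: "rr \<sigma> ts t1 (merge I {i} (a,b)) = r" for b
        unfolding r_def by (rule rr_cong) (use ts i in \<open>auto simp: merge_def I_def\<close>)
      have m1: "merge I {i} (a,b) t1 = a t1" "merge I {i} (a,b) i = b i" for b
        using ts i by (auto simp: merge_def I_def)
      have "AE y in lborel. \<not> (r \<noteq> 0 \<and> inner r (\<sigma> i *\<^sub>R y - \<sigma> t1 *\<^sub>R a t1) = 0)"
      proof (cases "r = 0")
        case True then show ?thesis by simp
      next
        case False
        have H: "{y. inner (\<sigma> i *\<^sub>R r) y = inner r (\<sigma> t1 *\<^sub>R a t1)} \<in> null_sets lborel"
          by (rule hyper_null) (use False si in simp)
        show ?thesis by (rule AE_I'[OF H]) (auto simp: inner_diff_right)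
      qed
      then have "AE y in distr (PiM {i} ?L) lborel (\<lambda>x. x i). \<not> (r \<noteq> 0 \<and> inner r (\<sigma> i *\<^sub>R y - \<sigma> t1 *\<^sub>R a t1) = 0)"
        unfolding ps.distr_singleton[of i] .
      from AE_distrD[OF _ this] have "AE b in PiM {i} ?L. \<not> (r \<noteq> 0 \<and> inner r (\<sigma> i *\<^sub>R b i - \<sigma> t1 *\<^sub>R a t1) = 0)"
        using measurable_component_singleton[of i "{i}" ?L] by simp
      then show "AE b in PiM {i} ?L. \<not> badP \<sigma> ts t1 i (merge I {i} (a, b))"
        unfolding badP_def rm m1 .
    qed
  qed
  then have "AE x in distr ?P ?N (merge I {i}). \<not> badP \<sigma> ts t1 i x"
    by (subst AE_distr_iff[OF mm sets])
  then show ?thesis unfolding eqN .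
qed



lemma det_part:
  fixes z :: "nat \<Rightarrow> real^'d"
  assumes n1: "n \<ge> 1" and ls: "linsep z n" and a3: "assumption3 z n" and al: "alpha z n \<le> 0"
  shows "\<exists>T\<subseteq>{..<n}. \<exists>i<n. \<exists>t1\<in>T. i \<notin> T \<and>
     (let ts = sorted_list_of_set T; r = z t1 - projL (map (\<lambda>t. z t - z t1) ts) (z t1)
      in r \<noteq> 0 \<and> inner r (z i - z t1) = 0)"
proof -
  interpret mm z n using n1 ls by unfold_locales
  obtain T i w where T: "T \<subseteq> {..<n}" "i < n" "i \<notin> T" "w \<in> span (z ` T)"
    "\<And>t. t \<in> T \<Longrightarrow> w \<bullet> z t = 1" "w \<bullet> z i = 1"
    using main_bad[OF a3 al] by blast
  have "T \<noteq> {}"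
  proof
    assume "T = {}"
    then have "w = 0" using T(4) by (simp add: span_empty)
    then show False using T(6) by simp
  qed
  then obtain t1 where t1: "t1 \<in> T" by blast
  have fT: "finite T" using T(1) finite_subset by blast
  have st: "set (sorted_list_of_set T) = T" using fT by simp
  have "z t1 - projL (map (\<lambda>t. z t - z t1) (sorted_list_of_set T)) (z t1) \<noteq> 0 \<and>
        inner (z t1 - projL (map (\<lambda>t. z t - z t1) (sorted_list_of_set T)) (z t1)) (z i - z t1) = 0"
    by (rule bad_r[OF st t1 T(4) T(5) T(6)])
  then show ?thesis using T t1 by (auto simp: Let_def)
qed

theorem mainTheorem6:
  fixes M :: "'a measure" and n :: nat
    and X :: "nat \<Rightarrow> 'a \<Rightarrow> real^'d" and Y :: "nat \<Rightarrow> 'a \<Rightarrow> real"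
    and f :: "(nat \<Rightarrow> real^'d) \<Rightarrow> ennreal"
  assumes "prob_space M"
    and "n \<ge> 1"
    and "\<And>i. i < n \<Longrightarrow> Y i \<in> borel_measurable M"
    and "\<And>i \<omega>. i < n \<Longrightarrow> \<omega> \<in> space M \<Longrightarrow> Y i \<omega> \<in> {-1, 1}"
    and "\<And>i \<omega>. i < n \<Longrightarrow> \<omega> \<in> space M \<Longrightarrow> norm (X i \<omega>) \<le> 1"
    and "distributed M (PiM {..<n} (\<lambda>_. lborel)) (\<lambda>\<omega>. \<lambda>i\<in>{..<n}. X i \<omega>) f"
  shows "AE \<omega> in M.
           (linsep (\<lambda>i. Y i \<omega> *\<^sub>R X i \<omega>) n \<and> assumption3 (\<lambda>i. Y i \<omega> *\<^sub>R X i \<omega>) n)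
           \<longrightarrow> alpha (\<lambda>i. Y i \<omega> *\<^sub>R X i \<omega>) n > 0"
proof -
  note n1 = assms(2) and Ysg = assms(4) and dist = assms(6)
  let ?N = "PiM {..<n} (\<lambda>_. lborel :: (real^'d) measure)"
  let ?X = "\<lambda>\<omega>. \<lambda>i\<in>{..<n}. X i \<omega>"
  define Sg where "Sg = PiE {..<n} (\<lambda>_. {-1, 1::real})"
  define G where "G x \<longleftrightarrow> (\<forall>\<sigma>\<in>Sg. \<forall>T\<in>Pow {..<n}. \<forall>i\<in>{..<n}. \<forall>t1\<in>T.
      i \<notin> T \<longrightarrow> \<not> badP \<sigma> (sorted_list_of_set T) t1 i x)" for x :: "nat \<Rightarrow> real^'d"
  have fSg: "finite Sg" unfolding Sg_def by (intro finite_PiE) auto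
  have AEN: "AE x in ?N. G x" unfolding G_def
  proof (intro AE_finite_allI fSg finite_Pow_iff[THEN iffD2] finite_lessThan)
    fix \<sigma> T i t1 assume \<sigma>: "\<sigma> \<in> Sg" and T: "T \<in> Pow {..<n}" and i: "i \<in> {..<n}" and t1: "t1 \<in> T"
    have fT: "finite T" using T finite_subset by blast
    show "AE x in ?N. i \<notin> T \<longrightarrow> \<not> badP \<sigma> (sorted_list_of_set T) t1 i x"
    proof (cases "i \<in> T")
      case True then show ?thesis by simp
    next
      case False
      have "\<sigma> i \<in> {-1, 1}" using \<sigma> i unfolding Sg_def by (auto simp: PiE_iff)
      then have "\<sigma> i \<noteq> 0" by auto
      then have "AE x in ?N. \<not> badP \<sigma> (sorted_list_of_set T) t1 i x"
        by (intro null_bad) (use fT T i t1 False in auto)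
      then show ?thesis by (rule eventually_mono) simp
    qed
  qed (meson PowD finite_lessThan finite_subset)
  have fm: "f \<in> borel_measurable ?N" using distributed_borel_measurable[OF dist] .
  have Xm: "?X \<in> measurable M ?N" using distributed_measurable[OF dist] .
  have "AE x in density ?N f. G x" unfolding AE_density[OF fm] using AEN by (rule eventually_mono) simp
  then have "AE x in distr M ?N ?X. G x" unfolding distributed_distr_eq_density[OF dist] .
  from AE_distrD[OF Xm this] have AEM: "AE \<omega> in M. G (?X \<omega>)" .
  have "AE \<omega> in M. G (?X \<omega>) \<and> \<omega> \<in> space M" using AEM AE_space by (rule eventually_conj)
  then show ?thesis
  proof (rule eventually_mono, intro impI)
    fix \<omega> assume hyp: "G (?X \<omega>) \<and> \<omega> \<in> space M"
    then have GX: "G (?X \<omega>)" and \<omega>: "\<omega> \<in> space M" by auto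
    define z where "z = (\<lambda>i. Y i \<omega> *\<^sub>R X i \<omega>)"
    assume pre: "linsep (\<lambda>i. Y i \<omega> *\<^sub>R X i \<omega>) n \<and> assumption3 (\<lambda>i. Y i \<omega> *\<^sub>R X i \<omega>) n"
    show "alpha (\<lambda>i. Y i \<omega> *\<^sub>R X i \<omega>) n > 0"
    proof (rule ccontr)
      assume "\<not> ?thesis"
      then have al: "alpha z n \<le> 0" unfolding z_def by (simp only: not_less)
      obtain T i t1 where T: "T \<subseteq> {..<n}" "i < n" "t1 \<in> T" "i \<notin> T" and
        bad: "(let ts = sorted_list_of_set T; r = z t1 - projL (map (\<lambda>t. z t - z t1) ts) (z t1)
               in r \<noteq> 0 \<and> inner r (z i - z t1) = 0)"
        using det_part[OF n1 _ _ al] pre unfolding z_def by blast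
      define \<sigma> where "\<sigma> = (\<lambda>j\<in>{..<n}. Y j \<omega>)"
      have \<sigma>S: "\<sigma> \<in> Sg" unfolding Sg_def \<sigma>_def using Ysg \<omega> by (auto simp: PiE_iff)
      have zz: "\<sigma> t *\<^sub>R ?X \<omega> t = z t" if "t < n" for t using that unfolding \<sigma>_def z_def by simp
      have fT: "finite T" using T(1) finite_subset by blast
      have st: "set (sorted_list_of_set T) \<subseteq> {..<n}" using fT T(1) by simp
      have "rr \<sigma> (sorted_list_of_set T) t1 (?X \<omega>) = z t1 - projL (map (\<lambda>t. z t - z t1) (sorted_list_of_set T)) (z t1)"
        unfolding rr_def using zz st T
        by (intro arg_cong2[where f="(-)"] arg_cong2[where f=projL] map_cong) auto
      then have "badP \<sigma> (sorted_list_of_set T) t1 i (?X \<omega>)"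
        using bad zz[of i] zz[of t1] T unfolding badP_def Let_def by auto
      moreover have "\<not> badP \<sigma> (sorted_list_of_set T) t1 i (?X \<omega>)"
        using GX \<sigma>S T unfolding G_def by auto
      ultimately show False by blast
    qed
  qed
qed


end
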